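(* Let $P(X)=\prod_{i=1}^n(X-x_i)=\sum_{i=0}^n a_iX^i$ ($a_n=1$) and $G^{ij}=\Gamma_{\mathbb E}(a_i,a_j)$, $0\le i,j\le n-1$, regarded as polynomial functions of $(a_0,\dots,a_{n-1})$. Then on the set $\mathcal D$ of coefficient vectors of polynomials with $n$ distinct real roots: (1) $\mathrm{discr}(P)=\det(G^{ij})_{0\le i,j\le n-1}$; (2) for every $i\in\{0,\dots,n-1\}$, $\sum_j G^{ij}\,\partial_{a_j}\log\mathrm{discr}(P)=2\sum_j\partial_{a_j}G^{ij}$; (3) $\sum_{i,j}X^iG^{ij}\,\partial_{a_j}\log\mathrm{discr}(P)=-P''(X)$, i.e. $\Gamma_{\mathbb E}\big(P(X),\log\mathrm{discr}(P)\big)=-P''(X)$.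
   Context: $\Gamma_{\mathbb E}(f,g)=\sum_i\partial_{x_i}f\,\partial_{x_i}g$ on $\mathbb{R}^n$. For $P=\prod(X-x_i)$, $\mathrm{discr}(P)=\prod_{i<j}(x_i-x_j)^2$, a polynomial in the coefficients. $P''$ is the second derivative in $X$. *)

theory Defs
  imports "HOL-Analysis.Analysis" "HOL-Computational_Algebra.Polynomial"
begin

text \<open>Points of R^n and coefficient vectors (a_0,...,a_{n-1}) are modelled as
  functions nat => real; only the indices below n matter.\<close>

definition partial :: "nat \<Rightarrow> ((nat \<Rightarrow> real) \<Rightarrow> real) \<Rightarrow> (nat \<Rightarrow> real) \<Rightarrow> real" where
  "partial k f x = deriv (\<lambda>t. f (x(k := t))) (x k)"

definition GammaE :: "nat \<Rightarrow> ((nat \<Rightarrow> real) \<Rightarrow> real) \<Rightarrow> ((nat \<Rightarrow> real) \<Rightarrow> real) \<Rightarrow> (nat \<Rightarrow> real) \<Rightarrow> real" where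
  "GammaE n f g x = (\<Sum>k<n. partial k f x * partial k g x)"

definition rootpoly :: "nat \<Rightarrow> (nat \<Rightarrow> real) \<Rightarrow> real poly" where
  "rootpoly n x = (\<Prod>k<n. [:- x k, 1:])"

definition coeffun :: "nat \<Rightarrow> nat \<Rightarrow> (nat \<Rightarrow> real) \<Rightarrow> real" where
  "coeffun n i x = coeff (rootpoly n x) i"

definition poly_of :: "nat \<Rightarrow> (nat \<Rightarrow> real) \<Rightarrow> real poly" where
  "poly_of n a = monom 1 n + (\<Sum>i<n. monom (a i) i)"

definition Dset :: "nat \<Rightarrow> (nat \<Rightarrow> real) set" where
  "Dset n = {a. \<exists>x. inj_on x {..<n} \<and> poly_of n a = rootpoly n x}"

definition rootvec :: "nat \<Rightarrow> (nat \<Rightarrow> real) \<Rightarrow> (nat \<Rightarrow> real)" where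
  "rootvec n a = (SOME x. poly_of n a = rootpoly n x)"

text \<open>discr(P) = prod_{i<j} (x_i - x_j)^2 as a function of the coefficients
  (well defined, being symmetric in the roots).\<close>
definition discr :: "nat \<Rightarrow> (nat \<Rightarrow> real) \<Rightarrow> real" where
  "discr n a = (let x = rootvec n a in
     (\<Prod>p\<in>{(i,j). i < j \<and> j < n}. (x (fst p) - x (snd p))^2))"

definition Gmat :: "nat \<Rightarrow> nat \<Rightarrow> nat \<Rightarrow> (nat \<Rightarrow> real) \<Rightarrow> real" where
  "Gmat n i j a = GammaE n (coeffun n i) (coeffun n j) (rootvec n a)"

definition detn :: "nat \<Rightarrow> (nat \<Rightarrow> nat \<Rightarrow> real) \<Rightarrow> real" where
  "detn n M = (\<Sum>p | p permutes {..<n}. of_int (sign p) * (\<Prod>i<n. M i (p i)))"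

end

theory Submission
  imports Defs "Jordan_Normal_Form.Determinant"
begin

definition Qp :: "nat \<Rightarrow> (nat \<Rightarrow> real) \<Rightarrow> nat \<Rightarrow> real poly" where
  "Qp n y k = (\<Prod>l\<in>{..<n}-{k}. [:- y l, 1:])"

definition Disc :: "nat \<Rightarrow> (nat \<Rightarrow> real) \<Rightarrow> real" where
  "Disc n y = (\<Prod>p\<in>{(i,j). i < j \<and> j < n}. (y (fst p) - y (snd p))^2)"

definition Gexp :: "nat \<Rightarrow> nat \<Rightarrow> real poly \<Rightarrow> real" where
  "Gexp i j P = (\<Sum>t\<le>i. coeff (pderiv P) (i-t) * coeff P (j+1+t) - coeff P (i-t) * coeff (pderiv P) (j+1+t))"

definition DetG :: "nat \<Rightarrow> real poly \<Rightarrow> real" where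
  "DetG n P = detn n (\<lambda>i j. Gexp i j P)"

lemma rootpoly_split: "k < n \<Longrightarrow> rootpoly n y = [:- y k, 1:] * Qp n y k"
  unfolding rootpoly_def Qp_def
  by (subst prod.remove[of _ k]) auto

lemma Qp_upd: "Qp n (y(k:=t)) k = Qp n y k"
  unfolding Qp_def by (rule prod.cong) auto

lemma lin_mult: "[:- (c::real), 1:] * Q = pCons 0 Q - Polynomial.smult c Q"
  by (simp add: mult_pCons_left)

lemma coeffun_upd: "k < n \<Longrightarrow> coeffun n i (y(k:=t)) = coeff (pCons 0 (Qp n y k)) i + t * (- coeff (Qp n y k) i)"
  unfolding coeffun_def
  by (subst rootpoly_split[of k n], simp, simp add: Qp_upd lin_mult)

lemma partial_affine:
  assumes "\<And>t. f (y(k:=t)) = A + t * B"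
  shows "partial k f y = B"
proof -
  have "(\<lambda>t. f (y(k:=t))) = (\<lambda>t. A + t * B)" using assms by auto
  moreover have "((\<lambda>t. A + t * B) has_real_derivative B) (at (y k))"
    by (auto intro!: derivative_eq_intros)
  ultimately show ?thesis unfolding partial_def by (simp add: DERIV_imp_deriv)
qed

lemma partial_coeffun: "k < n \<Longrightarrow> partial k (coeffun n i) y = - coeff (Qp n y k) i"
  by (rule partial_affine, rule coeffun_upd)

lemma partial_polyroot: "k < n \<Longrightarrow> partial k (\<lambda>y. poly (rootpoly n y) X) y = - poly (Qp n y k) X"
proof (rule partial_affine)
  fix t assume k: "k < n"
  show "poly (rootpoly n (y(k:=t))) X = X * poly (Qp n y k) X + t * (- poly (Qp n y k) X)"
    using k by (subst rootpoly_split[of k n]) (auto simp: Qp_upd algebra_simps)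
qed

lemma GammaE_coeffun: "GammaE n (coeffun n i) (coeffun n j) y = (\<Sum>k<n. coeff (Qp n y k) i * coeff (Qp n y k) j)"
  unfolding GammaE_def by (rule sum.cong) (auto simp: partial_coeffun)

lemma pderiv_rootpoly: "pderiv (rootpoly n y) = (\<Sum>k<n. Qp n y k)"
  unfolding rootpoly_def Qp_def pderiv_prod by (rule sum.cong) (auto simp: pderiv_pCons)

lemma telescope:
  assumes P: "P = [:- (c::real), 1:] * Q"
  shows "(\<Sum>t\<le>i. coeff Q (i-t) * coeff P (j+1+t) - coeff P (i-t) * coeff Q (j+1+t)) = coeff Q i * coeff Q j"
proof -
  define f where "f t = coeff Q (i-t) * coeff Q (j+t)" for t
  have cP: "coeff P m = (if m = 0 then 0 else coeff Q (m-1)) - c * coeff Q m" for m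
    unfolding P lin_mult by (cases m) auto
  have trm: "coeff Q (i-t) * coeff P (j+1+t) - coeff P (i-t) * coeff Q (j+1+t)
      = f t - (if t < i then f (Suc t) else 0)" if "t \<le> i" for t
    using that unfolding cP f_def
    by (auto simp: algebra_simps Suc_diff_Suc)
  have "(\<Sum>t\<le>i. coeff Q (i-t) * coeff P (j+1+t) - coeff P (i-t) * coeff Q (j+1+t))
     = (\<Sum>t\<le>i. f t) - (\<Sum>t\<le>i. (if t < i then f (Suc t) else 0))"
    unfolding sum_subtractf[symmetric] by (rule sum.cong[OF refl], rule trm) auto
  also have "(\<Sum>t\<le>i. (if t < i then f (Suc t) else 0)) = (\<Sum>t<i. f (Suc t))"
    by (simp add: lessThan_Suc_atMost[symmetric])
  also have "(\<Sum>t\<le>i. f t) = f 0 + (\<Sum>t<i. f (Suc t))"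
  proof (cases i)
    case 0 then show ?thesis by simp
  next
    case (Suc m) then show ?thesis
      by (simp only: sum.atMost_Suc_shift lessThan_Suc_atMost)
  qed
  finally show ?thesis by (simp add: f_def)
qed

lemma Gexp_rootpoly: "Gexp i j (rootpoly n y) = (\<Sum>k<n. coeff (Qp n y k) i * coeff (Qp n y k) j)"
proof -
  let ?P = "rootpoly n y"
  have "Gexp i j ?P = (\<Sum>t\<le>i. \<Sum>k<n. coeff (Qp n y k) (i-t) * coeff ?P (j+1+t) - coeff ?P (i-t) * coeff (Qp n y k) (j+1+t))"
    unfolding Gexp_def pderiv_rootpoly coeff_sum
    by (simp add: sum_distrib_left sum_distrib_right sum_subtractf)
  also have "\<dots> = (\<Sum>k<n. \<Sum>t\<le>i. coeff (Qp n y k) (i-t) * coeff ?P (j+1+t) - coeff ?P (i-t) * coeff (Qp n y k) (j+1+t))"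
    by (rule sum.swap)
  also have "\<dots> = (\<Sum>k<n. coeff (Qp n y k) i * coeff (Qp n y k) j)"
    by (rule sum.cong[OF refl], rule telescope, rule rootpoly_split) auto
  finally show ?thesis .
qed

lemma Gexp_GammaE: "Gexp i j (rootpoly n y) = GammaE n (coeffun n i) (coeffun n j) y"
  by (simp add: Gexp_rootpoly GammaE_coeffun)

lemma detn_det: "detn n M = Determinant.det (Matrix.mat n n (\<lambda>(i,j). M i j))"
proof -
  have "Determinant.det (Matrix.mat n n (\<lambda>(i,j). M i j)) =
    (\<Sum>p | p permutes {0..<n}. of_int (sign p) * (\<Prod>i = 0..<n. Matrix.mat n n (\<lambda>(i,j). M i j) $$ (i, p i)))"
    by (rule det_def') simp
  also have "\<dots> = detn n M"
    unfolding detn_def atLeast0LessThan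
  proof (rule sum.cong[OF refl], rule arg_cong[where f="\<lambda>x. _ * x"], rule prod.cong[OF refl])
    fix p i assume p: "p \<in> {p. p permutes {..<n}}" and i: "i \<in> {..<n}"
    then have "p i < n" by (auto dest: permutes_in_image)
    then show "Matrix.mat n n (\<lambda>(i,j). M i j) $$ (i, p i) = M i (p i)" using i by simp
  qed
  finally show ?thesis by simp
qed

lemma prod_list_diag: "A \<in> carrier_mat n n \<Longrightarrow> prod_list (diag_mat A) = (\<Prod>i<n. A $$ (i,i))"
proof -
  have "prod_list (map f [0..<m]) = (\<Prod>i<m. f i)" for f :: "nat \<Rightarrow> 'a::comm_monoid_mult" and m
    by (induct m) auto
  then show "A \<in> carrier_mat n n \<Longrightarrow> ?thesis" by (simp add: diag_mat_def)
qed

lemma det_diag_like: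
  assumes "A \<in> carrier_mat n n" "\<And>i j. i < n \<Longrightarrow> j < n \<Longrightarrow> j < i \<Longrightarrow> A $$ (i,j) = 0"
  shows "Determinant.det A = (\<Prod>i<n. A $$ (i,i))"
  using assms by (subst det_upper_triangular[of _ n]) (auto simp: upper_triangular_def prod_list_diag)

lemma det_lower_like:
  assumes "A \<in> carrier_mat n n" "\<And>i j. i < n \<Longrightarrow> j < n \<Longrightarrow> i < j \<Longrightarrow> A $$ (i,j) = 0"
  shows "Determinant.det A = (\<Prod>i<n. A $$ (i,i))"
  using assms by (subst det_lower_triangular[of n]) (auto simp: prod_list_diag)

lemma poly_sum_below: "degree (p::real poly) < n \<Longrightarrow> poly p x = (\<Sum>i<n. coeff p i * x ^ i)"
  by (subst poly_altdef, rule sum.mono_neutral_left) (auto simp: coeff_eq_0)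

definition Nw :: "(nat \<Rightarrow> real) \<Rightarrow> nat \<Rightarrow> real poly" where
  "Nw y j = (\<Prod>l<j. [:- y l, 1:])"

lemma degree_Nw: "degree (Nw y j) = j"
  unfolding Nw_def by (subst degree_prod_eq_sum_degree) auto

lemma lead_Nw: "coeff (Nw y j) j = 1"
  using lead_coeff_prod[of "\<lambda>l. [:- y l, 1:]" "{..<j}"] degree_Nw[of y j] unfolding Nw_def by simp

lemma degree_Qp: "k < n \<Longrightarrow> degree (Qp n y k) < n"
  unfolding Qp_def by (subst degree_prod_eq_sum_degree) (auto simp: card_Diff_singleton)

definition Jm :: "nat \<Rightarrow> (nat \<Rightarrow> real) \<Rightarrow> real mat" where
  "Jm n y = Matrix.mat n n (\<lambda>(i,k). coeff (Qp n y k) i)"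

lemma G_JJ: "Matrix.mat n n (\<lambda>(i,j). Gexp i j (rootpoly n y)) = Jm n y * transpose_mat (Jm n y)"
  by (rule eq_matI) (auto simp: Jm_def Gexp_rootpoly scalar_prod_def atLeast0LessThan intro!: sum.cong)

lemma DetG_J: "DetG n (rootpoly n y) = Determinant.det (Jm n y) ^ 2"
proof -
  have J: "Jm n y \<in> carrier_mat n n" by (simp add: Jm_def)
  have "DetG n (rootpoly n y) = Determinant.det (Jm n y * transpose_mat (Jm n y))"
    unfolding DetG_def detn_det G_JJ ..
  also have "\<dots> = Determinant.det (Jm n y) * Determinant.det (transpose_mat (Jm n y))"
    by (rule det_mult[OF J]) (use J in simp)
  also have "\<dots> = Determinant.det (Jm n y) ^ 2"
    using det_transpose[OF J] by (simp add: power2_eq_square)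
  finally show ?thesis .
qed

definition Pairs :: "nat \<Rightarrow> (nat \<times> nat) set" where
  "Pairs n = {(i,j). i < j \<and> j < n}"

lemma finite_Pairs[simp]: "finite (Pairs n)"
  by (rule finite_subset[of _ "{..<n} \<times> {..<n}"]) (auto simp: Pairs_def)

lemma Disc_Pairs: "Disc n y = (\<Prod>p\<in>Pairs n. (y (fst p) - y (snd p))^2)"
  unfolding Disc_def Pairs_def ..

lemma Qp_eq:
  assumes "a < n" "b < n" "a \<noteq> b" "y a = y b"
  shows "Qp n y a = Qp n y b"
proof -
  have "Qp n y a = [:- y b, 1:] * (\<Prod>l\<in>{..<n}-{a}-{b}. [:- y l, 1:])"
    unfolding Qp_def using assms by (subst prod.remove[of _ b]) auto
  moreover have "Qp n y b = [:- y a, 1:] * (\<Prod>l\<in>{..<n}-{b}-{a}. [:- y l, 1:])"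
    unfolding Qp_def using assms by (subst prod.remove[of _ a]) auto
  moreover have "{..<n}-{a}-{b} = {..<n}-{b}-{a}" by auto
  ultimately show ?thesis using assms by simp
qed

lemma detJ_noninj:
  assumes "\<not> inj_on y {..<n}"
  shows "Determinant.det (Jm n y) = 0 \<and> Disc n y = 0"
proof -
  obtain a b where ab: "a < n" "b < n" "a \<noteq> b" "y a = y b"
    using assms unfolding inj_on_def by auto
  have "Determinant.det (Jm n y) = 0"
  proof (rule det_identical_columns[of _ n a b])
    show "col (Jm n y) a = col (Jm n y) b"
      by (rule eq_vecI) (use ab Qp_eq[OF ab] in \<open>auto simp: Jm_def\<close>)
  qed (use ab in \<open>auto simp: Jm_def\<close>)
  moreover have "Disc n y = 0"
    unfolding Disc_Pairs
    by (rule prod_zero, simp, rule bexI[of _ "(min a b, max a b)"]) (use ab in \<open>auto simp: Pairs_def min_def max_def\<close>)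
  ultimately show ?thesis by simp
qed

definition Wm :: "nat \<Rightarrow> (nat \<Rightarrow> real) \<Rightarrow> real mat" where
  "Wm n y = Matrix.mat n n (\<lambda>(m,i). y m ^ i)"

definition Mm :: "nat \<Rightarrow> (nat \<Rightarrow> real) \<Rightarrow> real mat" where
  "Mm n y = Matrix.mat n n (\<lambda>(i,j). coeff (Nw y j) i)"

lemma WM: "Wm n y * Mm n y = Matrix.mat n n (\<lambda>(m,j). poly (Nw y j) (y m))"
proof (rule eq_matI)
  fix m j assume mj: "m < dim_row (Matrix.mat n n (\<lambda>(m,j). poly (Nw y j) (y m)))"
      "j < dim_col (Matrix.mat n n (\<lambda>(m,j). poly (Nw y j) (y m)))"
  then have "m < n" "j < n" by auto
  then show "(Wm n y * Mm n y) $$ (m, j) = Matrix.mat n n (\<lambda>(m,j). poly (Nw y j) (y m)) $$ (m, j)"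
    by (auto simp: Wm_def Mm_def scalar_prod_def atLeast0LessThan degree_Nw
        poly_sum_below[of "Nw y j" n] mult.commute intro!: sum.cong)
qed (auto simp: Wm_def Mm_def)

lemma WJ: "Wm n y * Jm n y = Matrix.mat n n (\<lambda>(m,k). poly (Qp n y k) (y m))"
proof (rule eq_matI)
  fix m k assume mj: "m < dim_row (Matrix.mat n n (\<lambda>(m,k). poly (Qp n y k) (y m)))"
      "k < dim_col (Matrix.mat n n (\<lambda>(m,k). poly (Qp n y k) (y m)))"
  then have "m < n" "k < n" by auto
  then show "(Wm n y * Jm n y) $$ (m, k) = Matrix.mat n n (\<lambda>(m,k). poly (Qp n y k) (y m)) $$ (m, k)"
    by (auto simp: Wm_def Jm_def scalar_prod_def atLeast0LessThan degree_Qp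
        poly_sum_below[of "Qp n y k" n] mult.commute intro!: sum.cong)
qed (auto simp: Wm_def Jm_def)

lemma det_Mm: "Determinant.det (Mm n y) = 1"
proof -
  have "Determinant.det (Mm n y) = (\<Prod>i<n. Mm n y $$ (i,i))"
    by (rule det_diag_like) (auto simp: Mm_def coeff_eq_0 degree_Nw)
  also have "\<dots> = 1" by (auto simp: Mm_def lead_Nw intro!: prod.neutral)
  finally show ?thesis .
qed

lemma det_WM: "Determinant.det (Wm n y * Mm n y) = (\<Prod>m<n. \<Prod>l<m. (y m - y l))"
proof -
  have "Determinant.det (Wm n y * Mm n y) = (\<Prod>i<n. (Wm n y * Mm n y) $$ (i,i))"
    unfolding WM
    by (rule det_lower_like) (auto simp: Nw_def poly_prod intro!: prod_zero)
  also have "\<dots> = (\<Prod>m<n. \<Prod>l<m. (y m - y l))"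
    unfolding WM by (auto simp: Nw_def poly_prod intro!: prod.cong)
  finally show ?thesis .
qed

lemma det_WJ: "Determinant.det (Wm n y * Jm n y) = (\<Prod>k<n. \<Prod>l\<in>{..<n}-{k}. (y k - y l))"
proof -
  have "Determinant.det (Wm n y * Jm n y) = (\<Prod>i<n. (Wm n y * Jm n y) $$ (i,i))"
    unfolding WJ
    by (rule det_diag_like) (auto simp: Qp_def poly_prod intro!: prod_zero)
  also have "\<dots> = (\<Prod>k<n. \<Prod>l\<in>{..<n}-{k}. (y k - y l))"
    unfolding WJ by (auto simp: Qp_def poly_prod intro!: prod.cong)
  finally show ?thesis .
qed

lemma V_sq: "(\<Prod>m<n. \<Prod>l<m. (y m - y l))^2 = Disc n y"
proof -
  have "(\<Prod>m<n. \<Prod>l<m. (y m - y l))^2 = (\<Prod>m<n. \<Prod>l<m. (y m - y l)^2)"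
    by (simp add: prod_power_distrib)
  also have "\<dots> = (\<Prod>(m,l)\<in>Sigma {..<n} (\<lambda>m. {..<m}). (y m - y l)^2)"
    by (rule prod.Sigma) auto
  also have "Sigma {..<n} (\<lambda>m. {..<m}) = (\<lambda>(i,j). (j,i)) ` Pairs n"
    by (auto simp: Pairs_def image_iff)
  also have "(\<Prod>(m,l)\<in>(\<lambda>(i,j). (j,i)) ` Pairs n. (y m - y l)^2) = (\<Prod>p\<in>Pairs n. (y (fst p) - y (snd p))^2)"
    by (subst prod.reindex) (auto simp: inj_on_def power2_commute intro!: prod.cong)
  finally show ?thesis by (simp add: Disc_Pairs)
qed

lemma U_sq: "(\<Prod>k<n. \<Prod>l\<in>{k<..<n}. (y k - y l))^2 = Disc n y"
proof -
  have "(\<Prod>k<n. \<Prod>l\<in>{k<..<n}. (y k - y l))^2 = (\<Prod>k<n. \<Prod>l\<in>{k<..<n}. (y k - y l)^2)"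
    by (simp add: prod_power_distrib)
  also have "\<dots> = (\<Prod>(k,l)\<in>Sigma {..<n} (\<lambda>k. {k<..<n}). (y k - y l)^2)"
    by (rule prod.Sigma) auto
  also have "Sigma {..<n} (\<lambda>k. {k<..<n}) = Pairs n"
    by (auto simp: Pairs_def)
  finally show ?thesis by (simp add: Disc_Pairs case_prod_beta)
qed

lemma R_VU: fixes y :: "nat \<Rightarrow> real" shows "(\<Prod>k<n. \<Prod>l\<in>{..<n}-{k}. (y k - y l)) = (\<Prod>m<n. \<Prod>l<m. (y m - y l)) * (\<Prod>k<n. \<Prod>l\<in>{k<..<n}. (y k - y l))"
proof -
  have "(\<Prod>l\<in>{..<n}-{k}. (y k - y l)) = (\<Prod>l<k. (y k - y l)) * (\<Prod>l\<in>{k<..<n}. (y k - y l))" if "k < n" for k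
  proof -
    have e: "{..<n}-{k} = {..<k} \<union> {k<..<n}" using that by auto
    show ?thesis unfolding e by (rule prod.union_disjoint) auto
  qed
  then show ?thesis by (simp add: prod.distrib)
qed

lemma detJ_sq: "Determinant.det (Jm n y) ^ 2 = Disc n y"
proof (cases "inj_on y {..<n}")
  case False then show ?thesis using detJ_noninj by simp
next
  case True
  have W: "Wm n y \<in> carrier_mat n n" and M: "Mm n y \<in> carrier_mat n n" and J: "Jm n y \<in> carrier_mat n n"
    by (auto simp: Wm_def Mm_def Jm_def)
  define V where "V = (\<Prod>m<n. \<Prod>l<m. (y m - y l))"
  define U where "U = (\<Prod>k<n. \<Prod>l\<in>{k<..<n}. (y k - y l))"
  have dW: "Determinant.det (Wm n y) = V"
    using det_WM[of n y] det_mult[OF W M] det_Mm by (simp add: V_def)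
  have dWJ: "Determinant.det (Wm n y) * Determinant.det (Jm n y) = V * U"
    using det_WJ[of n y] det_mult[OF W J] R_VU by (simp add: V_def U_def)
  have V0: "V \<noteq> 0"
    unfolding V_def using True by (auto simp: inj_on_def) (metis less_trans less_irrefl lessThan_iff)
  have "Determinant.det (Jm n y) = U" using dWJ dW V0 by simp
  then show ?thesis using U_sq by (simp add: U_def)
qed

lemma DetG_Disc: "DetG n (rootpoly n y) = Disc n y"
  using DetG_J detJ_sq by simp

lemma coeff_poly_of: "coeff (poly_of n b) m = (if m = n then 1 else if m < n then b m else 0)"
  unfolding poly_of_def by (auto simp: coeff_sum coeff_monom)

lemma poly_of_ne0: "poly_of n b \<noteq> 0"
proof
  assume "poly_of n b = 0"
  then have "coeff (poly_of n b) n = 0" by simp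
  then show False by (simp add: coeff_poly_of)
qed

lemma degree_poly_of: "degree (poly_of n b) = n"
proof (rule antisym)
  show "degree (poly_of n b) \<le> n" by (rule degree_le) (auto simp: coeff_poly_of)
  show "n \<le> degree (poly_of n b)" by (rule le_degree) (simp add: coeff_poly_of)
qed

lemma poly_of_cong: "(\<And>m. m < n \<Longrightarrow> b m = b' m) \<Longrightarrow> poly_of n b = poly_of n b'"
  by (rule poly_eqI) (simp add: coeff_poly_of)

lemma degree_rootpoly: "degree (rootpoly n y) = n"
  unfolding rootpoly_def by (subst degree_prod_eq_sum_degree) auto

lemma lead_rootpoly: "coeff (rootpoly n y) n = 1"
  using lead_coeff_prod[of "\<lambda>l. [:- y l, 1:]" "{..<n}"] degree_rootpoly[of n y] unfolding rootpoly_def by simp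

lemma poly_of_coef: "poly_of n (\<lambda>i. coeffun n i y) = rootpoly n y"
proof (rule poly_eqI)
  fix m show "coeff (poly_of n (\<lambda>i. coeffun n i y)) m = coeff (rootpoly n y) m"
    using lead_rootpoly[of n y] coeff_eq_0[of "rootpoly n y" m] degree_rootpoly[of n y]
    by (auto simp: coeff_poly_of coeffun_def)
qed

lemma coef_below: "poly_of n a = rootpoly n x \<Longrightarrow> m < n \<Longrightarrow> coeffun n m x = a m"
  unfolding coeffun_def by (metis coeff_poly_of less_not_refl)

definition has_roots :: "nat \<Rightarrow> (nat \<Rightarrow> real) \<Rightarrow> bool" where
  "has_roots n b \<longleftrightarrow> (\<exists>y. poly_of n b = rootpoly n y)"

lemma rootvec_ok: "has_roots n b \<Longrightarrow> poly_of n b = rootpoly n (rootvec n b)"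
  unfolding has_roots_def rootvec_def using someI_ex[of "\<lambda>x. poly_of n b = rootpoly n x"] by blast

lemma discr_Disc: "discr n b = Disc n (rootvec n b)"
  unfolding discr_def Disc_def Let_def ..

lemma discr_DetG: "has_roots n b \<Longrightarrow> discr n b = DetG n (poly_of n b)"
  using rootvec_ok[of n b] by (simp add: discr_Disc DetG_Disc)

lemma Gmat_Gexp: "has_roots n b \<Longrightarrow> Gmat n i j b = Gexp i j (poly_of n b)"
  using rootvec_ok[of n b] by (simp add: Gmat_def Gexp_GammaE)

lemma discr_coef: "discr n (\<lambda>i. coeffun n i y) = Disc n y"
proof -
  have "has_roots n (\<lambda>i. coeffun n i y)" unfolding has_roots_def using poly_of_coef by blast
  then show ?thesis by (simp add: discr_DetG poly_of_coef DetG_Disc)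
qed

lemma Disc_pos: "inj_on y {..<n} \<Longrightarrow> Disc n y > 0"
  unfolding Disc_Pairs
  by (rule prod_pos) (auto simp: Pairs_def inj_on_def, metis less_irrefl lessThan_iff order.strict_trans)

lemma Disc_inj: "Disc n y \<noteq> 0 \<Longrightarrow> inj_on y {..<n}"
  using detJ_noninj by blast

lemma Dset_inj: "a \<in> Dset n \<Longrightarrow> poly_of n a = rootpoly n x \<Longrightarrow> inj_on x {..<n}"
proof -
  assume a: "a \<in> Dset n" and x: "poly_of n a = rootpoly n x"
  from a obtain x0 where x0: "inj_on x0 {..<n}" "poly_of n a = rootpoly n x0" unfolding Dset_def by auto
  have "Disc n x = Disc n x0" using x x0(2) DetG_Disc[of n x] DetG_Disc[of n x0] by simp
  then show ?thesis using Disc_pos[OF x0(1)] Disc_inj by auto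
qed

lemma roots_dvd:
  assumes "finite S" "inj_on y S" "\<forall>k\<in>S. poly p (y k) = (0::real)"
  shows "(\<Prod>k\<in>S. [:- y k, 1:]) dvd p"
  using assms
proof (induction S arbitrary: p rule: finite_induct)
  case empty then show ?case by simp
next
  case (insert k S)
  have "[:- y k, 1:] dvd p" using insert.prems by (simp add: dvd_iff_poly_eq_0)
  then obtain q where q: "p = [:- y k, 1:] * q" by (auto elim: dvdE)
  have "\<forall>l\<in>S. poly q (y l) = 0"
  proof
    fix l assume l: "l \<in> S"
    then have "y l \<noteq> y k" using insert.prems(1) insert.hyps(2) by (auto simp: inj_on_def)
    moreover have "poly p (y l) = 0" using insert.prems l by auto
    ultimately show "poly q (y l) = 0" by (simp add: q)
  qed
  then have "(\<Prod>k\<in>S. [:- y k, 1:]) dvd q" using insert.IH insert.prems(1) by (auto simp: inj_on_def)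
  then have "[:- y k, 1:] * (\<Prod>k\<in>S. [:- y k, 1:]) dvd [:- y k, 1:] * q" by (rule mult_dvd_mono[OF dvd_refl])
  moreover have "(\<Prod>k\<in>insert k S. [:- y k, 1:]) = [:- y k, 1:] * (\<Prod>k\<in>S. [:- y k, 1:])"
    using insert.hyps by (rule prod.insert)
  ultimately show ?case unfolding q by simp
qed

lemma monic_eq:
  assumes "degree p = n" "coeff p n = 1" "inj_on y {..<n}" "\<forall>k<n. poly p (y k) = (0::real)"
  shows "p = rootpoly n y"
proof -
  have "rootpoly n y dvd p" unfolding rootpoly_def using roots_dvd[of "{..<n}" y p] assms by auto
  then obtain r where r: "p = rootpoly n y * r" by (auto elim: dvdE)
  have p0: "p \<noteq> 0" using assms(2) by auto
  then have r0: "r \<noteq> 0" and R0: "rootpoly n y \<noteq> 0" using r by auto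
  have "degree p = degree (rootpoly n y) + degree r" using r r0 R0 degree_mult_eq by blast
  then have dr: "degree r = 0" using assms(1) degree_rootpoly by simp
  have "lead_coeff p = lead_coeff (rootpoly n y) * lead_coeff r" using r lead_coeff_mult by blast
  then have "coeff r 0 = 1" using assms(1,2) dr degree_rootpoly[of n y] lead_rootpoly[of n y] by simp
  then have "r = 1" using dr by (metis degree_0_id one_pCons)
  then show ?thesis using r by simp
qed

lemma finite_pos_lb:
  assumes "finite (S::real set)" "\<forall>z\<in>S. z > 0"
  shows "\<exists>d>0. \<forall>z\<in>S. d \<le> z"
proof (cases "S = {}")
  case True then show ?thesis by (intro exI[of _ 1]) auto
next
  case False then show ?thesis using assms by (intro exI[of _ "Min S"]) auto
qed

lemma poly_poly_of_upd: "j < n \<Longrightarrow> poly (poly_of n (a(j:=s))) z = poly (poly_of n a) z + (s - a j) * z ^ j"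
proof -
  assume j: "j < n"
  have "poly_of n (a(j:=s)) = poly_of n a + monom (s - a j) j"
    by (rule poly_eqI) (use j in \<open>auto simp: coeff_poly_of coeff_monom\<close>)
  then show ?thesis by (simp add: poly_monom)
qed

lemma open_roots:
  assumes a: "a \<in> Dset n" and j: "j < n"
  shows "\<forall>\<^sub>F s in nhds (a j). has_roots n (a(j:=s))"
proof -
  obtain x where x: "inj_on x {..<n}" "poly_of n a = rootpoly n x" using a unfolding Dset_def by auto
  define P where "P = poly_of n a"
  define S where "S = (\<lambda>(k,l). \<bar>x k - x l\<bar>) ` {(k,l). k < n \<and> l < n \<and> k \<noteq> l}"
  have fS: "finite S" unfolding S_def
    by (rule finite_imageI, rule finite_subset[of _ "{..<n} \<times> {..<n}"]) auto
  have pS: "\<forall>z\<in>S. z > 0" using x(1) unfolding S_def inj_on_def by auto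
  obtain e where e: "e > 0" "\<forall>z\<in>S. e \<le> z" using finite_pos_lb[OF fS pS] by blast
  define d where "d = e / 2"
  have d0: "d > 0" using e(1) by (simp add: d_def)
  have sep: "2 * d \<le> \<bar>x k - x l\<bar>" if "k < n" "l < n" "k \<noteq> l" for k l
  proof -
    have "\<bar>x k - x l\<bar> \<in> S" unfolding S_def by (rule image_eqI[where x="(k,l)"]) (use that in auto)
    then show ?thesis using e(2) by (auto simp: d_def)
  qed
  have sign: "poly P (x k - d) * poly P (x k + d) < 0" if k: "k < n" for k
  proof -
    have PP: "poly P z = (z - x k) * poly (Qp n x k) z" for z
      unfolding P_def x(2) using k by (subst rootpoly_split[of k n]) (auto simp: algebra_simps)
    have "poly (Qp n x k) (x k - d) * poly (Qp n x k) (x k + d) = (\<Prod>l\<in>{..<n}-{k}. (x k - d - x l) * (x k + d - x l))"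
      by (simp add: Qp_def poly_prod prod.distrib)
    also have "\<dots> > 0"
    proof (rule prod_pos)
      fix l assume l: "l \<in> {..<n}-{k}"
      then have h: "2 * d \<le> \<bar>x k - x l\<bar>" using sep[of k l] k by auto
      have "d < \<bar>x k - x l\<bar>" using h d0 by linarith
      then have "d * d < \<bar>x k - x l\<bar> * \<bar>x k - x l\<bar>" using d0 by (intro mult_strict_mono) auto
      then have "d * d < (x k - x l) * (x k - x l)" by (simp add: abs_mult_self_eq)
      moreover have "(x k - d - x l) * (x k + d - x l) = (x k - x l) * (x k - x l) - d * d" by (simp add: algebra_simps)
      ultimately show "(x k - d - x l) * (x k + d - x l) > 0" by linarith
    qed
    finally have pos: "poly (Qp n x k) (x k - d) * poly (Qp n x k) (x k + d) > 0" .
    have eq: "poly P (x k - d) * poly P (x k + d) = - (d*d) * (poly (Qp n x k) (x k - d) * poly (Qp n x k) (x k + d))"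
      unfolding PP by (simp add: algebra_simps)
    have "- (d*d) < 0" using d0 by simp
    from mult_neg_pos[OF this pos] show ?thesis unfolding eq .
  qed
  have ev: "\<forall>\<^sub>F s in nhds (a j). \<forall>k\<in>{..<n}. poly (poly_of n (a(j:=s))) (x k - d) * poly (poly_of n (a(j:=s))) (x k + d) < 0"
  proof (rule eventually_ball_finite, simp, rule ballI)
    fix k assume k: "k \<in> {..<n}"
    define g where "g s = (poly P (x k - d) + (s - a j) * (x k - d) ^ j) * (poly P (x k + d) + (s - a j) * (x k + d) ^ j)" for s
    have "isCont g (a j)" unfolding g_def by (intro continuous_intros)
    then have "(g \<longlongrightarrow> g (a j)) (nhds (a j))"
      by (simp add: isCont_def tendsto_at_iff_tendsto_nhds)
    moreover have "g (a j) < 0" using sign k by (simp add: g_def)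
    ultimately have "\<forall>\<^sub>F s in nhds (a j). g s < 0" by (rule order_tendstoD)
    then show "\<forall>\<^sub>F s in nhds (a j). poly (poly_of n (a(j:=s))) (x k - d) * poly (poly_of n (a(j:=s))) (x k + d) < 0"
      by (rule eventually_mono) (use j in \<open>simp add: g_def poly_poly_of_upd P_def\<close>)
  qed
  show ?thesis
  proof (rule eventually_mono[OF ev])
    fix s assume hs: "\<forall>k\<in>{..<n}. poly (poly_of n (a(j:=s))) (x k - d) * poly (poly_of n (a(j:=s))) (x k + d) < 0"
    define p where "p = poly_of n (a(j:=s))"
    have "\<forall>k\<in>{..<n}. \<exists>r. x k - d < r \<and> r < x k + d \<and> poly p r = 0"
    proof
      fix k assume "k \<in> {..<n}"
      then show "\<exists>r. x k - d < r \<and> r < x k + d \<and> poly p r = 0"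
        using poly_IVT[of "x k - d" "x k + d" p] hs d0 by (auto simp: p_def)
    qed
    from bchoice[OF this] obtain y where y: "\<forall>k\<in>{..<n}. x k - d < y k \<and> y k < x k + d \<and> poly p (y k) = 0"
      by blast
    have "inj_on y {..<n}"
    proof (rule inj_onI, rule ccontr)
      fix k l assume kl: "k \<in> {..<n}" "l \<in> {..<n}" "y k = y l" "k \<noteq> l"
      then have "2 * d \<le> \<bar>x k - x l\<bar>" using sep by auto
      moreover have "\<bar>x k - x l\<bar> < 2 * d"
      proof -
        have "x k - d < y k" "y k < x k + d" "x l - d < y l" "y l < x l + d" using y kl(1,2) by auto
        then show ?thesis using kl(3) by (simp add: abs_less_iff)
      qed
      ultimately show False by simp
    qed
    then have "p = rootpoly n y"
      by (intro monic_eq) (use y in \<open>auto simp: p_def degree_poly_of coeff_poly_of\<close>)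
    then show "has_roots n (a(j:=s))" unfolding has_roots_def p_def by blast
  qed
qed

definition sm :: "nat \<Rightarrow> ((nat \<Rightarrow> real) \<Rightarrow> real) \<Rightarrow> (nat \<Rightarrow> real) \<Rightarrow> bool" where
  "sm n f b \<longleftrightarrow> (\<exists>g. \<forall>v. ((\<lambda>s. f (\<lambda>i. b i + s * v i)) has_real_derivative (\<Sum>j<n. v j * g j)) (at 0))"

lemma line0[simp]: fixes b v :: "nat \<Rightarrow> real" shows "(\<lambda>i. b i + 0 * v i) = b" by auto

lemma sm_const: "sm n (\<lambda>_. c) b"
  unfolding sm_def by (rule exI[of _ "\<lambda>_. 0"]) auto

lemma sm_coord: "m < n \<Longrightarrow> sm n (\<lambda>b. b m) b"
  unfolding sm_def
proof (intro exI[of _ "\<lambda>j. if j = m then 1 else 0"] allI)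
  fix v assume m: "m < n"
  have "((\<lambda>s. b m + s * v m) has_real_derivative v m) (at 0)"
    by (auto intro!: derivative_eq_intros)
  moreover have "(\<Sum>j<n. v j * (if j = m then 1 else 0)) = v m" using m by (simp add: if_distrib cong: if_cong)
  ultimately show "((\<lambda>s. b m + s * v m) has_real_derivative (\<Sum>j<n. v j * (if j = m then 1 else 0))) (at 0)"
    by simp
qed

lemma sm_add:
  assumes "sm n f b" "sm n h b"
  shows "sm n (\<lambda>b. f b + h b) b"
proof -
  obtain g1 where g1: "\<And>v. ((\<lambda>s. f (\<lambda>i. b i + s * v i)) has_real_derivative (\<Sum>j<n. v j * g1 j)) (at 0)"
    using assms(1) unfolding sm_def by blast
  obtain g2 where g2: "\<And>v. ((\<lambda>s. h (\<lambda>i. b i + s * v i)) has_real_derivative (\<Sum>j<n. v j * g2 j)) (at 0)"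
    using assms(2) unfolding sm_def by blast
  show ?thesis unfolding sm_def
  proof (intro exI[of _ "\<lambda>j. g1 j + g2 j"] allI)
    fix v show "((\<lambda>s. f (\<lambda>i. b i + s * v i) + h (\<lambda>i. b i + s * v i)) has_real_derivative (\<Sum>j<n. v j * (g1 j + g2 j))) (at 0)"
      using DERIV_add[OF g1[of v] g2[of v]] by (simp add: distrib_left sum.distrib)
  qed
qed

lemma sm_mult:
  assumes "sm n f b" "sm n h b"
  shows "sm n (\<lambda>b. f b * h b) b"
proof -
  obtain g1 where g1: "\<And>v. ((\<lambda>s. f (\<lambda>i. b i + s * v i)) has_real_derivative (\<Sum>j<n. v j * g1 j)) (at 0)"
    using assms(1) unfolding sm_def by blast
  obtain g2 where g2: "\<And>v. ((\<lambda>s. h (\<lambda>i. b i + s * v i)) has_real_derivative (\<Sum>j<n. v j * g2 j)) (at 0)"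
    using assms(2) unfolding sm_def by blast
  show ?thesis unfolding sm_def
  proof (intro exI[of _ "\<lambda>j. g1 j * h b + g2 j * f b"] allI)
    fix v show "((\<lambda>s. f (\<lambda>i. b i + s * v i) * h (\<lambda>i. b i + s * v i)) has_real_derivative (\<Sum>j<n. v j * (g1 j * h b + g2 j * f b))) (at 0)"
      using DERIV_mult[OF g1[of v] g2[of v]]
      by (simp add: distrib_left sum.distrib sum_distrib_right mult.assoc)
  qed
qed

lemma sm_diff: "sm n f b \<Longrightarrow> sm n h b \<Longrightarrow> sm n (\<lambda>b. f b - h b) b"
  using sm_add[of n f b "\<lambda>b. (-1) * h b"] sm_mult[of n "\<lambda>_. -1" b h] sm_const[of n "-1" b] by simp

lemma sm_sum:
  assumes "finite A" "\<And>a. a \<in> A \<Longrightarrow> sm n (f a) b"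
  shows "sm n (\<lambda>b. \<Sum>a\<in>A. f a b) b"
  using assms by (induction A rule: finite_induct) (auto intro!: sm_add sm_const)

lemma sm_prod:
  assumes "finite A" "\<And>a. a \<in> A \<Longrightarrow> sm n (f a) b"
  shows "sm n (\<lambda>b. \<Prod>a\<in>A. f a b) b"
  using assms by (induction A rule: finite_induct) (auto intro!: sm_mult sm_const)

lemma sm_ln:
  assumes "sm n f b" "f b > 0"
  shows "sm n (\<lambda>b. ln (f b)) b"
proof -
  obtain g1 where g1: "\<And>v. ((\<lambda>s. f (\<lambda>i. b i + s * v i)) has_real_derivative (\<Sum>j<n. v j * g1 j)) (at 0)"
    using assms(1) unfolding sm_def by blast
  show ?thesis unfolding sm_def
  proof (intro exI[of _ "\<lambda>j. g1 j / f b"] allI)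
    fix v
    have "((\<lambda>s. ln (f (\<lambda>i. b i + s * v i))) has_real_derivative inverse (f b) * (\<Sum>j<n. v j * g1 j)) (at 0)"
      using DERIV_chain2[OF DERIV_ln g1[of v]] assms(2) by simp
    then show "((\<lambda>s. ln (f (\<lambda>i. b i + s * v i))) has_real_derivative (\<Sum>j<n. v j * (g1 j / f b))) (at 0)"
      by (simp add: sum_distrib_left divide_inverse mult_ac)
  qed
qed

lemma sm_partial:
  assumes "sm n f b"
  shows "((\<lambda>s. f (\<lambda>i. b i + s * v i)) has_real_derivative (\<Sum>j<n. v j * partial j f b)) (at 0)"
proof -
  obtain g where g: "\<And>v. ((\<lambda>s. f (\<lambda>i. b i + s * v i)) has_real_derivative (\<Sum>j<n. v j * g j)) (at 0)"
    using assms unfolding sm_def by blast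
  have pj: "partial j f b = g j" if j: "j < n" for j
  proof -
    define e where "e i = (if i = j then 1 else (0::real))" for i
    define F where "F s = f (\<lambda>i. b i + s * e i)" for s
    have "(F has_real_derivative (\<Sum>j'<n. e j' * g j')) (at 0)" unfolding F_def by (rule g)
    moreover have "(\<Sum>j'<n. e j' * g j') = (\<Sum>j'<n. if j' = j then g j else 0)"
      by (rule sum.cong) (auto simp: e_def)
    moreover have "(\<Sum>j'<n. if j' = j then g j else 0) = g j" using j by simp
    ultimately have F: "(F has_real_derivative g j) (at (b j - b j))" by simp
    have "((\<lambda>t. F (t - b j)) has_real_derivative g j * 1) (at (b j))"
      by (rule DERIV_chain2[where f=F and g="\<lambda>t. t - b j" and x="b j", OF F]) (auto intro!: derivative_eq_intros)
    moreover have "(\<lambda>t. f (b(j:=t))) = (\<lambda>t. F (t - b j))"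
      unfolding F_def e_def by (auto intro!: ext arg_cong[where f=f])
    ultimately show ?thesis unfolding partial_def by (simp add: DERIV_imp_deriv)
  qed
  have "(\<Sum>j<n. v j * g j) = (\<Sum>j<n. v j * partial j f b)" by (rule sum.cong) (auto simp: pj)
  then show ?thesis using g[of v] by simp
qed

lemma sm_chain:
  assumes "sm n f b"
  shows "((\<lambda>t. f (\<lambda>i. b i + (t - t0) * v i)) has_real_derivative (\<Sum>j<n. v j * partial j f b)) (at t0)"
proof -
  have D: "((\<lambda>s. f (\<lambda>i. b i + s * v i)) has_real_derivative (\<Sum>j<n. v j * partial j f b)) (at (t0 - t0))"
    using sm_partial[OF assms] by simp
  have L: "((\<lambda>t. t - t0) has_real_derivative 1) (at t0)" by (auto intro!: derivative_eq_intros)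
  show ?thesis using DERIV_chain2[where f="\<lambda>s. f (\<lambda>i. b i + s * v i)" and g="\<lambda>t. t - t0" and x=t0, OF D L] by simp
qed

lemma sm_coeffP: "sm n (\<lambda>b. coeff (poly_of n b) m) b"
proof (cases "m < n")
  case True
  then have "(\<lambda>b. coeff (poly_of n b) m) = (\<lambda>b. b m)" by (auto simp: coeff_poly_of)
  then show ?thesis using sm_coord[OF True] by simp
next
  case False
  then have "(\<lambda>b. coeff (poly_of n b) m) = (\<lambda>b. if m = n then 1 else 0)" by (auto simp: coeff_poly_of)
  then show ?thesis using sm_const by simp
qed

lemma Gexp_alt: "Gexp i j P = (\<Sum>t\<le>i. of_nat (Suc (i-t)) * coeff P (Suc (i-t)) * coeff P (j+1+t) - coeff P (i-t) * (of_nat (Suc (j+1+t)) * coeff P (Suc (j+1+t))))"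
  unfolding Gexp_def coeff_pderiv by simp

lemma sm_Gexp: "sm n (\<lambda>b. Gexp i j (poly_of n b)) b"
  unfolding Gexp_alt
  by (intro sm_sum sm_diff sm_mult sm_const sm_coeffP) auto

lemma sm_DetG: "sm n (\<lambda>b. DetG n (poly_of n b)) b"
  unfolding DetG_def detn_def
  by (intro sm_sum sm_mult sm_const sm_prod sm_Gexp) (auto simp: finite_permutations)

lemma deriv_cong_ev:
  fixes f g :: "real \<Rightarrow> real"
  assumes "\<forall>\<^sub>F t in nhds x. f t = g t"
  shows "deriv f x = deriv g x"
proof -
  have "\<And>D. (f has_real_derivative D) (at x) \<longleftrightarrow> (g has_real_derivative D) (at x)"
    using DERIV_cong_ev[OF refl assms refl] by simp
  then show ?thesis unfolding deriv_def by simp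
qed

lemma partial_ev:
  assumes "\<forall>\<^sub>F t in nhds (a j). f (a(j:=t)) = g (a(j:=t))"
  shows "partial j f a = partial j g a"
  unfolding partial_def by (rule deriv_cong_ev[OF assms])

lemma pderiv_sum': "pderiv (sum f A) = (\<Sum>a\<in>A. pderiv (f a))"
  by (induction A rule: infinite_finite_induct) (auto simp: pderiv_add)

lemma smult_sum_right: "Polynomial.smult c (sum f A) = (\<Sum>a\<in>A. Polynomial.smult c (f a))"
  by (induction A rule: infinite_finite_induct) (auto simp: smult_add_right)

lemma smult2: "Polynomial.smult 2 p = p + (p::real poly)"
  by (metis one_add_one smult_1_left smult_add_left)

section \<open>Derivative of G in coefficient space\<close>

definition Bj :: "nat \<Rightarrow> nat \<Rightarrow> real poly \<Rightarrow> real" where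
  "Bj i j P = (\<Sum>t\<le>i. (if Suc (i-t) = j then of_nat (Suc (i-t)) * coeff P (j+1+t) else 0)
                    - (if i - t = j then of_nat (Suc (j+1+t)) * coeff P (Suc (j+1+t)) else 0))"

lemma coeff_poly_of_upd: "j < n \<Longrightarrow> coeff (poly_of n (a(j:=s))) m = coeff (poly_of n a) m + (if m = j then s - a j else 0)"
  by (auto simp: coeff_poly_of)

lemma Gexp_upd:
  assumes j: "j < n"
  shows "Gexp i j (poly_of n (a(j:=s))) = (Gexp i j (poly_of n a) - a j * Bj i j (poly_of n a)) + s * Bj i j (poly_of n a)"
proof -
  let ?c = "coeff (poly_of n a)"
  have "Gexp i j (poly_of n (a(j:=s))) = (\<Sum>t\<le>i. (of_nat (Suc (i-t)) * ?c (Suc (i-t)) * ?c (j+1+t) - ?c (i-t) * (of_nat (Suc (j+1+t)) * ?c (Suc (j+1+t))))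
      + (s - a j) * ((if Suc (i-t) = j then of_nat (Suc (i-t)) * ?c (j+1+t) else 0)
                    - (if i - t = j then of_nat (Suc (j+1+t)) * ?c (Suc (j+1+t)) else 0)))"
    unfolding Gexp_alt
    by (rule sum.cong[OF refl]) (use j in \<open>auto simp: coeff_poly_of_upd algebra_simps\<close>)
  also have "\<dots> = Gexp i j (poly_of n a) + (s - a j) * Bj i j (poly_of n a)"
    unfolding Gexp_alt Bj_def by (simp add: sum.distrib sum_distrib_left)
  finally show ?thesis by (simp add: algebra_simps)
qed

lemma partial_Gexp: "j < n \<Longrightarrow> partial j (\<lambda>b. Gexp i j (poly_of n b)) a = Bj i j (poly_of n a)"
  by (rule partial_affine, rule Gexp_upd)

lemma gauss_suc: "(\<Sum>t<m. real (Suc t)) = real m * (real m + 1) / 2"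
  by (induct m) (auto simp: field_simps)

lemma sum_rev_suc: "(\<Sum>t\<le>i. real (Suc (i - t))) = real (Suc i) * (real (Suc i) + 1) / 2"
proof -
  have "(\<Sum>t\<le>i. real (Suc (i - t))) = (\<Sum>t<Suc i. real (Suc (Suc i - Suc t)))"
    by (simp add: lessThan_Suc_atMost)
  also have "\<dots> = (\<Sum>t<Suc i. real (Suc t))"
    by (rule sum.nat_diff_reindex)
  also have "\<dots> = real (Suc i) * (real (Suc i) + 1) / 2" by (rule gauss_suc)
  finally show ?thesis .
qed

lemma sum_Bj:
  assumes i: "i < n"
  shows "2 * (\<Sum>j<n. Bj i j (poly_of n a)) = - coeff (pderiv (pderiv (poly_of n a))) i"
proof -
  let ?c = "coeff (poly_of n a)"
  have "(\<Sum>j<n. Bj i j (poly_of n a)) =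
      (\<Sum>t\<le>i. \<Sum>j<n. (if Suc (i-t) = j then of_nat (Suc (i-t)) * ?c (j+1+t) else 0)
                    - (if i - t = j then of_nat (Suc (j+1+t)) * ?c (Suc (j+1+t)) else 0))"
    unfolding Bj_def by (rule sum.swap)
  also have "\<dots> = (\<Sum>t\<le>i. (if Suc (i-t) < n then of_nat (Suc (i-t)) * ?c (Suc (Suc i)) else 0)
                    - of_nat (Suc (Suc i)) * ?c (Suc (Suc i)))"
  proof (rule sum.cong[OF refl])
    fix t assume t: "t \<in> {..i}"
    have e1: "Suc (i-t) + 1 + t = Suc (Suc i)" "Suc (i - t + 1 + t) = Suc (Suc i)" using t by auto
    have "i - t < n" using i by auto
    then show "(\<Sum>j<n. (if Suc (i-t) = j then of_nat (Suc (i-t)) * ?c (j+1+t) else 0)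
                    - (if i - t = j then of_nat (Suc (j+1+t)) * ?c (Suc (j+1+t)) else 0)) =
         (if Suc (i-t) < n then of_nat (Suc (i-t)) * ?c (Suc (Suc i)) else 0)
                    - of_nat (Suc (Suc i)) * ?c (Suc (Suc i))"
      unfolding sum_subtractf using e1 by (simp add: eq_commute[of "Suc (i-t)"] eq_commute[of "i-t"])
  qed
  also have "\<dots> = - (real (Suc i) * (real (Suc i) + 1) / 2) * ?c (Suc (Suc i))"
  proof (cases "?c (Suc (Suc i)) = 0")
    case True then show ?thesis by (auto intro!: sum.neutral)
  next
    case False
    then have "Suc (Suc i) \<le> n" by (auto simp: coeff_poly_of split: if_splits)
    then have cond: "\<And>t. t \<in> {..i} \<Longrightarrow> Suc (i-t) < n" by auto
    have "(\<Sum>t\<le>i. (if Suc (i-t) < n then of_nat (Suc (i-t)) * ?c (Suc (Suc i)) else 0)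
                    - of_nat (Suc (Suc i)) * ?c (Suc (Suc i)))
      = (\<Sum>t\<le>i. real (Suc (i-t)) * ?c (Suc (Suc i)) - real (Suc (Suc i)) * ?c (Suc (Suc i)))"
      by (rule sum.cong) (auto simp: cond)
    also have "\<dots> = (\<Sum>t\<le>i. real (Suc (i-t))) * ?c (Suc (Suc i)) - real (Suc i) * (real (Suc (Suc i)) * ?c (Suc (Suc i)))"
      by (simp only: sum_subtractf sum_distrib_right[symmetric] sum_constant card_atMost of_nat_id)
    also have "\<dots> = - (real (Suc i) * (real (Suc i) + 1) / 2) * ?c (Suc (Suc i))"
      unfolding sum_rev_suc by (simp add: field_simps)
    finally show ?thesis .
  qed
  finally show ?thesis by (simp add: coeff_pderiv field_simps)
qed

definition Q2 :: "nat \<Rightarrow> (nat \<Rightarrow> real) \<Rightarrow> nat \<Rightarrow> nat \<Rightarrow> real poly" where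
  "Q2 n x i j = (\<Prod>l\<in>{..<n}-{i}-{j}. [:- x l, 1:])"

lemma Q2_sym: "Q2 n x i j = Q2 n x j i"
  unfolding Q2_def by (rule arg_cong[where f="prod _"]) auto

lemma Qp_Q2: "i < n \<Longrightarrow> j < n \<Longrightarrow> i \<noteq> j \<Longrightarrow> Qp n x i = [:- x j, 1:] * Q2 n x i j"
  unfolding Qp_def Q2_def by (subst prod.remove[of _ j]) auto

lemma pderiv_Qp: "pderiv (Qp n x k) = (\<Sum>l\<in>{..<n}-{k}. Q2 n x k l)"
  unfolding Qp_def Q2_def pderiv_prod by (rule sum.cong) (auto simp: pderiv_pCons)

lemma P2_Pairs: "pderiv (pderiv (rootpoly n x)) = (\<Sum>p\<in>Pairs n. Polynomial.smult 2 (Q2 n x (fst p) (snd p)))"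
proof -
  have "pderiv (pderiv (rootpoly n x)) = (\<Sum>k<n. \<Sum>l\<in>{..<n}-{k}. Q2 n x k l)"
    by (simp add: pderiv_rootpoly pderiv_sum' pderiv_Qp)
  also have "\<dots> = (\<Sum>(k,l)\<in>Sigma {..<n} (\<lambda>k. {..<n}-{k}). Q2 n x k l)"
    by (rule sum.Sigma) auto
  also have "Sigma {..<n} (\<lambda>k. {..<n}-{k}) = Pairs n \<union> (\<lambda>(i,j). (j,i)) ` Pairs n"
    by (auto simp: Pairs_def image_iff)
  also have "(\<Sum>(k,l)\<in>Pairs n \<union> (\<lambda>(i,j). (j,i)) ` Pairs n. Q2 n x k l)
      = (\<Sum>(k,l)\<in>Pairs n. Q2 n x k l) + (\<Sum>(k,l)\<in>(\<lambda>(i,j). (j,i)) ` Pairs n. Q2 n x k l)"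
    by (rule sum.union_disjoint, simp, simp, auto simp: Pairs_def)
  also have "(\<Sum>(k,l)\<in>(\<lambda>(i,j). (j,i)) ` Pairs n. Q2 n x k l) = (\<Sum>(k,l)\<in>Pairs n. Q2 n x k l)"
    by (subst sum.reindex) (auto simp: inj_on_def Q2_sym intro!: sum.cong)
  finally show ?thesis
    by (simp add: case_prod_beta smult2 sum.distrib sum_distrib_left)
qed

lemma Pairs_inj: "inj_on x {..<n} \<Longrightarrow> (i,j) \<in> Pairs n \<Longrightarrow> x i \<noteq> x j"
proof
  assume inj: "inj_on x {..<n}" and p: "(i,j) \<in> Pairs n" and e: "x i = x j"
  then have "i < n" "j < n" "i < j" by (auto simp: Pairs_def)
  then show False using inj_onD[OF inj e] by auto
qed

definition Dk :: "nat \<Rightarrow> (nat \<Rightarrow> real) \<Rightarrow> nat \<Rightarrow> real" where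
  "Dk n x k = (\<Sum>p\<in>Pairs n. 2 * ((if fst p = k then 1 else 0) - (if snd p = k then 1 else 0)) / (x (fst p) - x (snd p)))"

lemma deriv_term:
  assumes "x i \<noteq> x j"
  shows "((\<lambda>t. ln (((x(k:=t)) i - (x(k:=t)) j)^2)) has_real_derivative
           2 * ((if i = k then 1 else 0) - (if j = k then 1 else 0)) / (x i - x j)) (at (x k))"
proof -
  define D :: real where "D = (if i = k then 1 else 0) - (if j = k then 1 else 0)"
  define u where "u t = (if i = k then t else x i) - (if j = k then t else x j)" for t
  have u: "(u has_real_derivative D) (at (x k))"
    unfolding u_def D_def by (cases "i = k"; cases "j = k") (auto intro!: derivative_eq_intros)
  have ux: "u (x k) = x i - x j" unfolding u_def by auto
  have pos: "0 < (u (x k))^2" using assms ux by simp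
  have sq: "((\<lambda>t. (u t)^2) has_real_derivative D * u (x k) + u (x k) * D) (at (x k))"
    using DERIV_mult[OF u u] by (simp add: power2_eq_square)
  have L: "((\<lambda>t. ln ((u t)^2)) has_real_derivative inverse ((u (x k))^2) * (D * u (x k) + u (x k) * D)) (at (x k))"
    by (rule DERIV_chain2[OF DERIV_ln[OF pos] sq])
  have val: "inverse ((u (x k))^2) * (D * u (x k) + u (x k) * D) = 2 * D / (x i - x j)"
    using ux assms by (simp add: field_simps power2_eq_square)
  have fe: "(\<lambda>t. ln (((x(k:=t)) i - (x(k:=t)) j)^2)) = (\<lambda>t. ln ((u t)^2))"
    unfolding u_def by auto
  show ?thesis unfolding fe D_def[symmetric] using L unfolding val .
qed

lemma deriv_lnDisc:
  assumes inj: "inj_on x {..<n}" and k: "k < n"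
  shows "((\<lambda>t. ln (Disc n (x(k:=t)))) has_real_derivative Dk n x k) (at (x k))"
proof -
  have ev: "\<forall>\<^sub>F t in nhds (x k). \<forall>l\<in>{..<n}-{k}. t \<noteq> x l"
  proof (rule eventually_ball_finite, simp, rule ballI)
    fix l assume l: "l \<in> {..<n}-{k}"
    then have "x k \<noteq> x l" using inj k by (auto simp: inj_on_def)
    then show "\<forall>\<^sub>F t in nhds (x k). t \<noteq> x l" by (rule t1_space_nhds)
  qed
  have ev1: "\<forall>\<^sub>F t in nhds (x k). ln (Disc n (x(k:=t))) = (\<Sum>p\<in>Pairs n. ln (((x(k:=t)) (fst p) - (x(k:=t)) (snd p))^2))"
  proof (rule eventually_mono[OF ev])
    fix t assume t: "\<forall>l\<in>{..<n}-{k}. t \<noteq> x l"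
    have "((x(k:=t)) (fst p) - (x(k:=t)) (snd p))^2 \<noteq> 0" if p: "p \<in> Pairs n" for p
    proof -
      obtain i j where ij: "p = (i,j)" "i < j" "j < n" using p by (auto simp: Pairs_def)
      have "x i \<noteq> x j" using Pairs_inj[OF inj, of i j] p ij by simp
      then show ?thesis using t ij by auto
    qed
    then show "ln (Disc n (x(k:=t))) = (\<Sum>p\<in>Pairs n. ln (((x(k:=t)) (fst p) - (x(k:=t)) (snd p))^2))"
      unfolding Disc_Pairs by (rule ln_prod[OF finite_Pairs])
  qed
  have d1: "((\<lambda>t. \<Sum>p\<in>Pairs n. ln (((x(k:=t)) (fst p) - (x(k:=t)) (snd p))^2)) has_real_derivative Dk n x k) (at (x k))"
    unfolding Dk_def
  proof (rule DERIV_sum)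
    fix p assume p: "p \<in> Pairs n"
    then have "x (fst p) \<noteq> x (snd p)" using Pairs_inj[OF inj, of "fst p" "snd p"] by simp
    then show "((\<lambda>t. ln (((x(k:=t)) (fst p) - (x(k:=t)) (snd p))^2)) has_real_derivative
           2 * ((if fst p = k then 1 else 0) - (if snd p = k then 1 else 0)) / (x (fst p) - x (snd p))) (at (x k))"
      by (rule deriv_term)
  qed
  show ?thesis using DERIV_cong_ev[OF refl ev1 refl] d1 by simp
qed

lemma Dk_poly:
  assumes inj: "inj_on x {..<n}"
  shows "(\<Sum>k<n. Polynomial.smult (Dk n x k) (Qp n x k)) = pderiv (pderiv (rootpoly n x))"
proof -
  have "(\<Sum>k<n. Polynomial.smult (Dk n x k) (Qp n x k)) =
     (\<Sum>k<n. \<Sum>p\<in>Pairs n. Polynomial.smult (2 * ((if fst p = k then 1 else 0) - (if snd p = k then 1 else 0)) / (x (fst p) - x (snd p))) (Qp n x k))"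
    unfolding Dk_def by (simp add: smult_sum)
  also have "\<dots> = (\<Sum>p\<in>Pairs n. \<Sum>k<n. Polynomial.smult (2 * ((if fst p = k then 1 else 0) - (if snd p = k then 1 else 0)) / (x (fst p) - x (snd p))) (Qp n x k))"
    by (rule sum.swap)
  also have "\<dots> = (\<Sum>p\<in>Pairs n. Polynomial.smult 2 (Q2 n x (fst p) (snd p)))"
  proof (rule sum.cong[OF refl])
    fix p assume p: "p \<in> Pairs n"
    obtain i j where ij: "p = (i,j)" "i < j" "j < n" using p by (auto simp: Pairs_def)
    have d: "x i - x j \<noteq> 0" using Pairs_inj[OF inj, of i j] p ij by simp
    have "(\<Sum>k<n. Polynomial.smult (2 * ((if i = k then 1 else 0) - (if j = k then 1 else 0)) / (x i - x j)) (Qp n x k))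
        = (\<Sum>k<n. (if k = i then Polynomial.smult (2 / (x i - x j)) (Qp n x k) else 0)
                 - (if k = j then Polynomial.smult (2 / (x i - x j)) (Qp n x k) else 0))"
      by (rule sum.cong[OF refl]) (auto simp: ij)
    also have "\<dots> = Polynomial.smult (2 / (x i - x j)) (Qp n x i - Qp n x j)"
      using ij by (simp add: sum_subtractf smult_diff_right)
    also have "Qp n x i - Qp n x j = Polynomial.smult (x i - x j) (Q2 n x i j)"
    proof -
      have e1: "Qp n x i = [:- x j, 1:] * Q2 n x i j" using ij by (intro Qp_Q2) auto
      have e2: "Qp n x j = [:- x i, 1:] * Q2 n x i j" using Qp_Q2[of j n i x] Q2_sym[of n x j i] ij by auto
      have "Qp n x i - Qp n x j = ([:- x j, 1:] - [:- x i, 1:]) * Q2 n x i j"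
        unfolding e1 e2 by (rule left_diff_distrib[symmetric])
      also have "[:- x j, 1:] - [:- x i, 1:] = [:x i - x j:]" by simp
      finally show ?thesis by simp
    qed
    also have "Polynomial.smult (2 / (x i - x j)) (Polynomial.smult (x i - x j) (Q2 n x i j)) = Polynomial.smult 2 (Q2 n x i j)"
    proof -
      have c: "2 / (x i - x j) * (x i - x j) = 2" using d by (simp add: field_simps)
      show ?thesis by (simp only: smult_smult c)
    qed
    finally show "(\<Sum>k<n. Polynomial.smult (2 * ((if fst p = k then 1 else 0) - (if snd p = k then 1 else 0)) / (x (fst p) - x (snd p))) (Qp n x k))
        = Polynomial.smult 2 (Q2 n x (fst p) (snd p))" using ij by simp
  qed
  also have "\<dots> = pderiv (pderiv (rootpoly n x))" by (rule P2_Pairs[symmetric])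
  finally show ?thesis .
qed

definition FF :: "nat \<Rightarrow> (nat \<Rightarrow> real) \<Rightarrow> real" where
  "FF n b = ln (DetG n (poly_of n b))"

lemma Dset_roots: "a \<in> Dset n \<Longrightarrow> has_roots n a"
  unfolding Dset_def has_roots_def by auto

lemma Lc_partial:
  assumes "a \<in> Dset n" "j < n"
  shows "partial j (\<lambda>b. ln (discr n b)) a = partial j (FF n) a"
  unfolding FF_def
  by (rule partial_ev, rule eventually_mono[OF open_roots[OF assms]]) (simp add: discr_DetG)

lemma Gmat_partial:
  assumes "a \<in> Dset n" "j < n"
  shows "partial j (Gmat n i j) a = Bj i j (poly_of n a)"
proof -
  have "partial j (Gmat n i j) a = partial j (\<lambda>b. Gexp i j (poly_of n b)) a"
    by (rule partial_ev, rule eventually_mono[OF open_roots[OF assms]]) (simp add: Gmat_Gexp)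
  also have "\<dots> = Bj i j (poly_of n a)" using assms(2) by (rule partial_Gexp)
  finally show ?thesis .
qed

lemma Gmat_roots:
  assumes "poly_of n a = rootpoly n x"
  shows "Gmat n i j a = (\<Sum>k<n. coeff (Qp n x k) i * coeff (Qp n x k) j)"
proof -
  have "has_roots n a" using assms unfolding has_roots_def by blast
  then show ?thesis using assms by (simp add: Gmat_Gexp Gexp_rootpoly)
qed

lemma chain_Dk:
  assumes a: "a \<in> Dset n" and x: "poly_of n a = rootpoly n x" and k: "k < n"
  shows "Dk n x k = - (\<Sum>j<n. coeff (Qp n x k) j * partial j (FF n) a)"
proof -
  have inj: "inj_on x {..<n}" using Dset_inj[OF a x] .
  define b0 where "b0 = (\<lambda>i. coeffun n i x)"
  define v where "v = (\<lambda>j. - coeff (Qp n x k) j)"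
  have pos: "DetG n (poly_of n b0) > 0"
    unfolding b0_def poly_of_coef DetG_Disc using Disc_pos[OF inj] .
  have sm: "sm n (FF n) b0" unfolding FF_def by (rule sm_ln[OF sm_DetG pos])
  have D1: "((\<lambda>t. FF n (\<lambda>i. b0 i + (t - x k) * v i)) has_real_derivative (\<Sum>j<n. v j * partial j (FF n) b0)) (at (x k))"
    by (rule sm_chain[OF sm])
  have line: "(\<lambda>i. b0 i + (t - x k) * v i) = (\<lambda>i. coeffun n i (x(k:=t)))" for t
  proof
    fix i
    have "coeffun n i x = coeffun n i (x(k:= x k))" by simp
    then show "b0 i + (t - x k) * v i = coeffun n i (x(k:=t))"
      unfolding b0_def v_def using coeffun_upd[OF k, of i x] coeffun_upd[OF k, of i x "x k"]
      by (simp add: algebra_simps)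
  qed
  have fe: "(\<lambda>t. FF n (\<lambda>i. b0 i + (t - x k) * v i)) = (\<lambda>t. ln (Disc n (x(k:=t))))"
    unfolding line FF_def poly_of_coef DetG_Disc ..
  have D2: "((\<lambda>t. ln (Disc n (x(k:=t)))) has_real_derivative Dk n x k) (at (x k))"
    by (rule deriv_lnDisc[OF inj k])
  have eq: "Dk n x k = (\<Sum>j<n. v j * partial j (FF n) b0)"
    using DERIV_unique[OF D2] D1 unfolding fe by blast
  have pj: "partial j (FF n) b0 = partial j (FF n) a" if j: "j < n" for j
  proof -
    have b0j: "b0 j = a j" unfolding b0_def using coef_below[OF x j] .
    have "\<And>t. poly_of n (b0(j:=t)) = poly_of n (a(j:=t))"
      by (rule poly_of_cong) (auto simp: b0_def coef_below[OF x])
    then have "(\<lambda>t. FF n (b0(j:=t))) = (\<lambda>t. FF n (a(j:=t)))" unfolding FF_def by simp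
    then show ?thesis unfolding partial_def b0j by simp
  qed
  show ?thesis unfolding eq v_def
    by (simp add: pj sum_negf[symmetric])
qed

lemma coeff_P2_zero: "n \<le> i \<Longrightarrow> coeff (pderiv (pderiv (poly_of n a))) i = 0"
  by (simp add: coeff_pderiv coeff_poly_of)

lemma poly_sum_n:
  assumes "\<And>i. n \<le> i \<Longrightarrow> coeff p i = 0"
  shows "poly p (X::real) = (\<Sum>i<n. coeff p i * X ^ i)"
proof (cases "p = 0")
  case True then show ?thesis by simp
next
  case False
  have "degree p < n"
  proof (rule ccontr)
    assume "\<not> degree p < n"
    then have "coeff p (degree p) = 0" using assms by simp
    then show False using False by simp
  qed
  then show ?thesis by (rule poly_sum_below)
qed

lemma part2_lhs:
  assumes a: "a \<in> Dset n" and x: "poly_of n a = rootpoly n x" and i: "i < n"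
  shows "(\<Sum>j<n. Gmat n i j a * partial j (\<lambda>b. ln (discr n b)) a) = - coeff (pderiv (pderiv (poly_of n a))) i"
proof -
  have inj: "inj_on x {..<n}" using Dset_inj[OF a x] .
  have "(\<Sum>j<n. Gmat n i j a * partial j (\<lambda>b. ln (discr n b)) a)
      = (\<Sum>j<n. (\<Sum>k<n. coeff (Qp n x k) i * coeff (Qp n x k) j) * partial j (FF n) a)"
    by (rule sum.cong[OF refl]) (simp add: Gmat_roots[OF x] Lc_partial[OF a])
  also have "\<dots> = (\<Sum>k<n. coeff (Qp n x k) i * (\<Sum>j<n. coeff (Qp n x k) j * partial j (FF n) a))"
  proof -
    have "(\<Sum>j<n. (\<Sum>k<n. coeff (Qp n x k) i * coeff (Qp n x k) j) * partial j (FF n) a)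
        = (\<Sum>j<n. \<Sum>k<n. coeff (Qp n x k) i * (coeff (Qp n x k) j * partial j (FF n) a))"
      by (simp add: sum_distrib_right mult.assoc)
    also have "\<dots> = (\<Sum>k<n. \<Sum>j<n. coeff (Qp n x k) i * (coeff (Qp n x k) j * partial j (FF n) a))"
      by (rule sum.swap)
    also have "\<dots> = (\<Sum>k<n. coeff (Qp n x k) i * (\<Sum>j<n. coeff (Qp n x k) j * partial j (FF n) a))"
      by (simp add: sum_distrib_left)
    finally show ?thesis .
  qed
  also have "\<dots> = (\<Sum>k<n. coeff (Qp n x k) i * (- Dk n x k))"
    by (rule sum.cong[OF refl]) (simp add: chain_Dk[OF a x])
  also have "\<dots> = - coeff (\<Sum>k<n. Polynomial.smult (Dk n x k) (Qp n x k)) i"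
    by (simp add: coeff_sum sum_negf[symmetric] mult.commute)
  also have "\<dots> = - coeff (pderiv (pderiv (poly_of n a))) i"
    unfolding Dk_poly[OF inj] x ..
  finally show ?thesis .
qed

lemma part4:
  assumes a: "a \<in> Dset n" and x: "poly_of n a = rootpoly n x"
  shows "GammaE n (\<lambda>y. poly (rootpoly n y) X) (\<lambda>y. ln (discr n (\<lambda>i. coeffun n i y))) x
         = - poly (pderiv (pderiv (poly_of n a))) X"
proof -
  have inj: "inj_on x {..<n}" using Dset_inj[OF a x] .
  have pk: "partial k (\<lambda>y. ln (discr n (\<lambda>i. coeffun n i y))) x = Dk n x k" if k: "k < n" for k
    unfolding partial_def discr_coef
    by (rule DERIV_imp_deriv, rule deriv_lnDisc[OF inj k])
  have "GammaE n (\<lambda>y. poly (rootpoly n y) X) (\<lambda>y. ln (discr n (\<lambda>i. coeffun n i y))) x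
      = (\<Sum>k<n. - (poly (Qp n x k) X * Dk n x k))"
    unfolding GammaE_def by (rule sum.cong[OF refl]) (simp add: partial_polyroot pk)
  also have "\<dots> = - poly (\<Sum>k<n. Polynomial.smult (Dk n x k) (Qp n x k)) X"
    by (simp add: poly_sum sum_negf mult.commute)
  also have "\<dots> = - poly (pderiv (pderiv (poly_of n a))) X"
    unfolding Dk_poly[OF inj] x ..
  finally show ?thesis .
qed

theorem mainTheorem4:
  fixes n :: nat and a :: "nat \<Rightarrow> real"
  assumes "a \<in> Dset n"
  shows "discr n a = detn n (\<lambda>i j. Gmat n i j a)
    \<and> (\<forall>i<n. (\<Sum>j<n. Gmat n i j a * partial j (\<lambda>b. ln (discr n b)) a)
                 = 2 * (\<Sum>j<n. partial j (Gmat n i j) a))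
    \<and> (\<forall>X::real. (\<Sum>i<n. \<Sum>j<n. X ^ i * Gmat n i j a * partial j (\<lambda>b. ln (discr n b)) a)
                 = - poly (pderiv (pderiv (poly_of n a))) X)
    \<and> (\<forall>x. poly_of n a = rootpoly n x \<longrightarrow>
           (\<forall>X::real. GammaE n (\<lambda>y. poly (rootpoly n y) X)
                         (\<lambda>y. ln (discr n (\<lambda>i. coeffun n i y))) x
                      = - poly (pderiv (pderiv (poly_of n a))) X))"
proof -
  have hr: "has_roots n a" using Dset_roots[OF assms] .
  define x where "x = rootvec n a"
  have x: "poly_of n a = rootpoly n x" unfolding x_def by (rule rootvec_ok[OF hr])
  have p1: "discr n a = detn n (\<lambda>i j. Gmat n i j a)"
    using hr by (simp add: discr_DetG Gmat_Gexp DetG_def)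
  have p2: "(\<Sum>j<n. Gmat n i j a * partial j (\<lambda>b. ln (discr n b)) a)
                 = 2 * (\<Sum>j<n. partial j (Gmat n i j) a)" if i: "i < n" for i
  proof -
    have "2 * (\<Sum>j<n. partial j (Gmat n i j) a) = 2 * (\<Sum>j<n. Bj i j (poly_of n a))"
      by (simp add: Gmat_partial[OF assms])
    also have "\<dots> = - coeff (pderiv (pderiv (poly_of n a))) i" by (rule sum_Bj[OF i])
    finally show ?thesis using part2_lhs[OF assms x i] by simp
  qed
  have p3: "(\<Sum>i<n. \<Sum>j<n. X ^ i * Gmat n i j a * partial j (\<lambda>b. ln (discr n b)) a)
                 = - poly (pderiv (pderiv (poly_of n a))) X" for X :: real
  proof -
    have "(\<Sum>i<n. \<Sum>j<n. X ^ i * Gmat n i j a * partial j (\<lambda>b. ln (discr n b)) a)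
        = (\<Sum>i<n. X ^ i * (\<Sum>j<n. Gmat n i j a * partial j (\<lambda>b. ln (discr n b)) a))"
      by (simp add: sum_distrib_left mult.assoc)
    also have "\<dots> = (\<Sum>i<n. X ^ i * (- coeff (pderiv (pderiv (poly_of n a))) i))"
      by (rule sum.cong[OF refl]) (simp add: part2_lhs[OF assms x])
    also have "\<dots> = - poly (pderiv (pderiv (poly_of n a))) X"
      by (subst poly_sum_n[of n], simp add: coeff_P2_zero) (simp add: sum_negf[symmetric] mult.commute)
    finally show ?thesis .
  qed
  have p4: "\<forall>x. poly_of n a = rootpoly n x \<longrightarrow>
           (\<forall>X::real. GammaE n (\<lambda>y. poly (rootpoly n y) X)
                         (\<lambda>y. ln (discr n (\<lambda>i. coeffun n i y))) x
                      = - poly (pderiv (pderiv (poly_of n a))) X)"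
    using part4[OF assms] by blast
  show ?thesis using p1 p2 p3 p4 by blast
qed

end
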